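(* Let $\mathcal{A}\in\mathbb{C}^{I_{1\ldots N}\times I_{1\ldots N}}$, and let $\mathcal{M},\mathcal{N}\in\mathbb{C}^{I_{1\ldots N}\times I_{1\ldots N}}$ be Hermitian positive definite tensors. Let $\{\mathcal{U}_1,\ldots,\mathcal{U}_r\}\subset\mathbb{C}^{I_{1\ldots N}}$ be $\mathcal{M}$-orthonormal and $\{\mathcal{V}_1,\ldots,\mathcal{V}_r\}\subset\mathbb{C}^{I_{1\ldots N}}$ be $\mathcal{N}^{-1}$-orthonormal. If $\mathcal{A}=\mathcal{U}_1*_1\mathcal{V}_1^H+\cdots+\mathcal{U}_r*_1\mathcal{V}_r^H$, then $$\mathcal{A}^{\dagger}_{\mathcal{M},\mathcal{N}}=\mathcal{N}^{-1}*_N(\mathcal{V}_1*_1\mathcal{U}_1^H+\cdots+\mathcal{V}_r*_1\mathcal{U}_r^H)*_N\mathcal{M}$$ and $W(\mathcal{A}^{\dagger}_{\mathcal{M},\mathcal{N}})=W(\mathcal{A}^{\#}_{\mathcal{M}\mathcal{N}})$.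
   Context: Write $I_{1\ldots N}$ for $I_1\times\cdots\times I_N$. Einstein product: $(\mathcal{A}*_N\mathcal{B})_{i_1\ldots i_Nj_1\ldots j_L}=\sum_{k_1,\ldots,k_N}a_{i_1\ldots i_Nk_1\ldots k_N}b_{k_1\ldots k_Nj_1\ldots j_L}$ (also when $\mathcal{B}\in\mathbb{C}^{I_{1\ldots N}}$). $\mathcal{A}^H$ is the conjugate transpose; inverses are w.r.t. $*_N$. For $\mathcal{X},\mathcal{Y}\in\mathbb{C}^{I_{1\ldots N}}$, $\mathcal{X}*_1\mathcal{Y}^H$ denotes the tensor in $\mathbb{C}^{I_{1\ldots N}\times I_{1\ldots N}}$ with $(i_1,\ldots,i_N,j_1,\ldots,j_N)$-entry $x_{i_1\ldots i_N}\overline{y_{j_1\ldots j_N}}$. $\langle\mathcal{X},\mathcal{Y}\rangle=\mathcal{Y}^H*_N\mathcal{X}=\sum\overline{y_{i_1\ldots i_N}}x_{i_1\ldots i_N}$ and $\|\mathcal{X}\|=\langle\mathcal{X},\mathcal{X}\rangle^{1/2}$. $\mathcal{M}$ is Hermitian positive definite if $\mathcal{M}^H=\mathcal{M}$ and $\langle\mathcal{M}*_N\mathcal{X},\mathcal{X}\rangle>0$ for nonzero $\mathcal{X}$. For a Hermitian positive definite $\mathcal{P}$, a set $\{\mathcal{X}_1,\ldots,\mathcal{X}_r\}$ is $\mathcal{P}$-orthonormal if $\langle\mathcal{P}*_N\mathcal{X}_i,\mathcal{X}_j\rangle=\delta_{ij}$. Numerical range: $W(\mathcal{A})=\{\langle\mathcal{A}*_N\mathcal{X},\mathcal{X}\rangle:\|\mathcal{X}\|=1\}$.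 Weighted conjugate transpose: $\mathcal{A}^{\#}_{\mathcal{M}\mathcal{N}}=\mathcal{N}^{-1}*_N\mathcal{A}^H*_N\mathcal{M}$. Weighted Moore-Penrose inverse $\mathcal{A}^{\dagger}_{\mathcal{M},\mathcal{N}}$: the unique $\mathcal{X}$ with $\mathcal{A}*_N\mathcal{X}*_N\mathcal{A}=\mathcal{A}$, $\mathcal{X}*_N\mathcal{A}*_N\mathcal{X}=\mathcal{X}$, $(\mathcal{M}*_N\mathcal{A}*_N\mathcal{X})^H=\mathcal{M}*_N\mathcal{A}*_N\mathcal{X}$, $(\mathcal{N}*_N\mathcal{X}*_N\mathcal{A})^H=\mathcal{N}*_N\mathcal{X}*_N\mathcal{A}$. *)

theory Defs
  imports Complex_Main "HOL-Library.Complex_Order" "HOL-Library.Function_Algebras"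
begin

text \<open>Dimensions I_1,...,I_N are given as a list ds of length N.
  A multi-index (i_1,...,i_N) is a list; the index set I_1 x ... x I_N is tidx ds
  (0-based indices). Order-N tensors are functions nat list => complex, order-2N tensors
  are functions nat list => nat list => complex (first block of N indices, second block);
  they are required to vanish outside the index set.\<close>

definition tidx :: "nat list \<Rightarrow> nat list set" where
  "tidx ds = {is. length is = length ds \<and> (\<forall>k<length ds. is ! k < ds ! k)}"

definition vspace :: "nat list \<Rightarrow> (nat list \<Rightarrow> complex) set" where
  "vspace ds = {X. \<forall>i. i \<notin> tidx ds \<longrightarrow> X i = 0}"

definition tspace :: "nat list \<Rightarrow> (nat list \<Rightarrow> nat list \<Rightarrow> complex) set" where
  "tspace ds = {A. \<forall>i j. (i \<notin> tidx ds \<or> j \<notin> tidx ds) \<longrightarrow> A i j = 0}"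

definition eprod :: "nat list \<Rightarrow> (nat list \<Rightarrow> nat list \<Rightarrow> complex) \<Rightarrow> (nat list \<Rightarrow> nat list \<Rightarrow> complex) \<Rightarrow> (nat list \<Rightarrow> nat list \<Rightarrow> complex)" where
  "eprod ds A B = (\<lambda>i j. if i \<in> tidx ds \<and> j \<in> tidx ds then (\<Sum>k\<in>tidx ds. A i k * B k j) else 0)"

definition evprod :: "nat list \<Rightarrow> (nat list \<Rightarrow> nat list \<Rightarrow> complex) \<Rightarrow> (nat list \<Rightarrow> complex) \<Rightarrow> (nat list \<Rightarrow> complex)" where
  "evprod ds A X = (\<lambda>i. if i \<in> tidx ds then (\<Sum>k\<in>tidx ds. A i k * X k) else 0)"

definition ctrans :: "nat list \<Rightarrow> (nat list \<Rightarrow> nat list \<Rightarrow> complex) \<Rightarrow> (nat list \<Rightarrow> nat list \<Rightarrow> complex)" where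
  "ctrans ds A = (\<lambda>i j. if i \<in> tidx ds \<and> j \<in> tidx ds then cnj (A j i) else 0)"

definition tid :: "nat list \<Rightarrow> (nat list \<Rightarrow> nat list \<Rightarrow> complex)" where
  "tid ds = (\<lambda>i j. if i \<in> tidx ds \<and> j \<in> tidx ds \<and> i = j then 1 else 0)"

definition tinv :: "nat list \<Rightarrow> (nat list \<Rightarrow> nat list \<Rightarrow> complex) \<Rightarrow> (nat list \<Rightarrow> nat list \<Rightarrow> complex)" where
  "tinv ds A = (THE X. X \<in> tspace ds \<and> eprod ds A X = tid ds \<and> eprod ds X A = tid ds)"

definition outer :: "nat list \<Rightarrow> (nat list \<Rightarrow> complex) \<Rightarrow> (nat list \<Rightarrow> complex) \<Rightarrow> (nat list \<Rightarrow> nat list \<Rightarrow> complex)" where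
  "outer ds X Y = (\<lambda>i j. if i \<in> tidx ds \<and> j \<in> tidx ds then X i * cnj (Y j) else 0)"

definition tinner :: "nat list \<Rightarrow> (nat list \<Rightarrow> complex) \<Rightarrow> (nat list \<Rightarrow> complex) \<Rightarrow> complex" where
  "tinner ds X Y = (\<Sum>i\<in>tidx ds. cnj (Y i) * X i)"

definition tnorm :: "nat list \<Rightarrow> (nat list \<Rightarrow> complex) \<Rightarrow> real" where
  "tnorm ds X = sqrt (Re (tinner ds X X))"

definition hpd :: "nat list \<Rightarrow> (nat list \<Rightarrow> nat list \<Rightarrow> complex) \<Rightarrow> bool" where
  "hpd ds M \<longleftrightarrow> M \<in> tspace ds \<and> ctrans ds M = M \<and>
     (\<forall>X\<in>vspace ds. X \<noteq> 0 \<longrightarrow> tinner ds (evprod ds M X) X > 0)"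

definition orthonormal_wrt :: "nat list \<Rightarrow> (nat list \<Rightarrow> nat list \<Rightarrow> complex) \<Rightarrow> nat \<Rightarrow> (nat \<Rightarrow> nat list \<Rightarrow> complex) \<Rightarrow> bool" where
  "orthonormal_wrt ds P r U \<longleftrightarrow>
     (\<forall>i\<in>{1..r}. U i \<in> vspace ds) \<and>
     (\<forall>i\<in>{1..r}. \<forall>j\<in>{1..r}. tinner ds (evprod ds P (U i)) (U j) = (if i = j then 1 else 0))"

definition numrange :: "nat list \<Rightarrow> (nat list \<Rightarrow> nat list \<Rightarrow> complex) \<Rightarrow> complex set" where
  "numrange ds A = {tinner ds (evprod ds A X) X | X. X \<in> vspace ds \<and> tnorm ds X = 1}"

definition wctrans :: "nat list \<Rightarrow> (nat list \<Rightarrow> nat list \<Rightarrow> complex) \<Rightarrow> (nat list \<Rightarrow> nat list \<Rightarrow> complex) \<Rightarrow> (nat list \<Rightarrow> nat list \<Rightarrow> complex) \<Rightarrow> (nat list \<Rightarrow> nat list \<Rightarrow> complex)" where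
  "wctrans ds A M N = eprod ds (eprod ds (tinv ds N) (ctrans ds A)) M"

definition wmpinv :: "nat list \<Rightarrow> (nat list \<Rightarrow> nat list \<Rightarrow> complex) \<Rightarrow> (nat list \<Rightarrow> nat list \<Rightarrow> complex) \<Rightarrow> (nat list \<Rightarrow> nat list \<Rightarrow> complex) \<Rightarrow> (nat list \<Rightarrow> nat list \<Rightarrow> complex)" where
  "wmpinv ds A M N = (THE X. X \<in> tspace ds \<and>
      eprod ds (eprod ds A X) A = A \<and>
      eprod ds (eprod ds X A) X = X \<and>
      ctrans ds (eprod ds M (eprod ds A X)) = eprod ds M (eprod ds A X) \<and>
      ctrans ds (eprod ds N (eprod ds X A)) = eprod ds N (eprod ds X A))"

end

theory Submission
  imports Defs
begin

lemma sum_fun_apply: "(\<Sum>k\<in>K. F k) x = (\<Sum>k\<in>K. F k x)"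
  by (induction K rule: infinite_finite_induct) auto

lemma finite_tidx: "finite (tidx ds)"
proof -
  have "tidx ds \<subseteq> {xs. set xs \<subseteq> {..<Max (insert 0 (set ds))} \<and> length xs = length ds}"
  proof
    fix xs assume "xs \<in> tidx ds"
    then have l: "length xs = length ds" and b: "\<forall>k<length ds. xs ! k < ds ! k" by (auto simp: tidx_def)
    have "x < Max (insert 0 (set ds))" if "x \<in> set xs" for x
    proof -
      obtain k where k: "k < length xs" "xs ! k = x" using \<open>x \<in> set xs\<close> by (auto simp: in_set_conv_nth)
      then have "x < ds ! k" using b l by auto
      also have "ds ! k \<le> Max (insert 0 (set ds))" using k l by (intro Max_ge) auto
      finally show ?thesis .
    qed
    then show "xs \<in> {xs. set xs \<subseteq> {..<Max (insert 0 (set ds))} \<and> length xs = length ds}" using l by auto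
  qed
  moreover have "finite {xs. set xs \<subseteq> {..<Max (insert 0 (set ds))} \<and> length xs = length ds}"
    by (rule finite_lists_length_eq) auto
  ultimately show ?thesis by (rule finite_subset)
qed

lemma eprod_assoc: "eprod ds (eprod ds A B) C = eprod ds A (eprod ds B C)"
  unfolding eprod_def
  by (auto simp: fun_eq_iff sum_distrib_left sum_distrib_right mult.assoc intro: sum.swap[THEN trans] cong: if_cong)

lemma eprod_tspace[simp]: "eprod ds A B \<in> tspace ds"
  by (auto simp: eprod_def tspace_def)
lemma ctrans_tspace[simp]: "ctrans ds A \<in> tspace ds"
  by (auto simp: ctrans_def tspace_def)
lemma outer_tspace[simp]: "outer ds X Y \<in> tspace ds"
  by (auto simp: outer_def tspace_def)
lemma tid_tspace[simp]: "tid ds \<in> tspace ds"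
  by (auto simp: tid_def tspace_def)
lemma evprod_vspace[simp]: "evprod ds A X \<in> vspace ds"
  by (auto simp: evprod_def vspace_def)

lemma eprod_tid_left: "A \<in> tspace ds \<Longrightarrow> eprod ds (tid ds) A = A"
  by (auto simp: fun_eq_iff eprod_def tid_def tspace_def if_distrib[of "\<lambda>x. x * _"] sum.delta finite_tidx cong: if_cong)

lemma eprod_tid_right: "A \<in> tspace ds \<Longrightarrow> eprod ds A (tid ds) = A"
  by (auto simp: fun_eq_iff eprod_def tid_def tspace_def if_distrib[of "\<lambda>x. _ * x"] sum.delta' finite_tidx cong: if_cong)

lemma evprod_tid: "X \<in> vspace ds \<Longrightarrow> evprod ds (tid ds) X = X"
  by (auto simp: fun_eq_iff evprod_def tid_def vspace_def if_distrib[of "\<lambda>x. x * _"] sum.delta finite_tidx cong: if_cong)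

lemma ctrans_eprod: "ctrans ds (eprod ds A B) = eprod ds (ctrans ds B) (ctrans ds A)"
  by (auto simp: fun_eq_iff eprod_def ctrans_def mult.commute intro!: sum.cong)

lemma ctrans_ctrans: "A \<in> tspace ds \<Longrightarrow> ctrans ds (ctrans ds A) = A"
  by (auto simp: fun_eq_iff ctrans_def tspace_def)

lemma ctrans_outer: "ctrans ds (outer ds X Y) = outer ds Y X"
  by (auto simp: fun_eq_iff ctrans_def outer_def)

lemma ctrans_sum: "ctrans ds (\<Sum>k\<in>K. F k) = (\<Sum>k\<in>K. ctrans ds (F k))"
  by (auto simp: fun_eq_iff ctrans_def sum_fun_apply)

lemma eprod_sum_left: "eprod ds (\<Sum>k\<in>K. F k) B = (\<Sum>k\<in>K. eprod ds (F k) B)"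
  by (auto simp: fun_eq_iff eprod_def sum_fun_apply sum_distrib_right intro: sum.swap)

lemma eprod_sum_right: "eprod ds B (\<Sum>k\<in>K. F k) = (\<Sum>k\<in>K. eprod ds B (F k))"
  by (auto simp: fun_eq_iff eprod_def sum_fun_apply sum_distrib_left intro: sum.swap)

lemma eprod_outer_outer:
  "eprod ds (outer ds X Y) (outer ds Z W) = (\<lambda>i j. tinner ds Z Y * outer ds X W i j)"
  by (auto simp: fun_eq_iff eprod_def outer_def tinner_def sum_distrib_left sum_distrib_right mult_ac intro!: sum.cong)

lemma eprod_outer_left: "eprod ds B (outer ds X Y) = outer ds (evprod ds B X) Y"
  by (auto simp: fun_eq_iff eprod_def outer_def evprod_def sum_distrib_left mult_ac intro!: sum.cong)

lemma eprod_outer_right: "eprod ds (outer ds X Y) B = outer ds X (evprod ds (ctrans ds B) Y)"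
  by (auto simp: fun_eq_iff eprod_def outer_def evprod_def ctrans_def sum_distrib_left mult_ac intro!: sum.cong)

lemma evprod_eprod: "evprod ds (eprod ds A B) X = evprod ds A (evprod ds B X)"
  unfolding eprod_def evprod_def
  by (auto simp: fun_eq_iff sum_distrib_left sum_distrib_right mult.assoc intro: sum.swap[THEN trans] cong: if_cong)

lemma tinner_cnj: "tinner ds X Y = cnj (tinner ds Y X)"
  by (auto simp: tinner_def mult.commute)

lemma hpd_inj: assumes "hpd ds M" "z \<in> vspace ds" "evprod ds M z = 0" shows "z = 0"
proof (rule ccontr)
  assume "z \<noteq> 0"
  then have "tinner ds (evprod ds M z) z > 0" using assms by (auto simp: hpd_def)
  then show False using assms(3) by (simp add: tinner_def)
qed

lemma hpd_cancel: assumes "hpd ds M" "Z1 \<in> tspace ds" "Z2 \<in> tspace ds"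
  "eprod ds M Z1 = eprod ds M Z2" shows "Z1 = Z2"
proof (rule ext, rule ext)
  fix i j
  show "Z1 i j = Z2 i j"
  proof (cases "j \<in> tidx ds")
    case False then show ?thesis using assms(2,3) by (auto simp: tspace_def)
  next
    case True
    define z where "z = (\<lambda>i. Z1 i j - Z2 i j)"
    have zv: "z \<in> vspace ds" using assms(2,3) by (auto simp: tspace_def vspace_def z_def)
    have "evprod ds M z = 0"
    proof
      fix i
      show "evprod ds M z i = 0 i"
      proof (cases "i \<in> tidx ds")
        case True
        have "eprod ds M Z1 i j = eprod ds M Z2 i j" using assms(4) by simp
        then show ?thesis using True \<open>j \<in> tidx ds\<close>
          by (simp add: evprod_def eprod_def z_def right_diff_distrib sum_subtractf)
      qed (simp add: evprod_def)
    qed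
    then have "z = 0" using hpd_inj[OF assms(1) zv] by simp
    then show ?thesis by (simp add: z_def fun_eq_iff)
  qed
qed

definition wmp_pred where
  "wmp_pred ds A M N X \<longleftrightarrow> X \<in> tspace ds \<and>
      eprod ds (eprod ds A X) A = A \<and>
      eprod ds (eprod ds X A) X = X \<and>
      ctrans ds (eprod ds M (eprod ds A X)) = eprod ds M (eprod ds A X) \<and>
      ctrans ds (eprod ds N (eprod ds X A)) = eprod ds N (eprod ds X A)"

lemma wmp_unique:
  assumes M: "hpd ds M" and N: "hpd ds N" and X: "wmp_pred ds A M N X" and Y: "wmp_pred ds A M N Y"
  shows "X = Y"
proof -
  have Mh: "ctrans ds M = M" and Nh: "ctrans ds N = N" using M N by (auto simp: hpd_def)
  note XX = X[unfolded wmp_pred_def] and YY = Y[unfolded wmp_pred_def]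
  define P where "P = eprod ds A X"
  define P' where "P' = eprod ds A Y"
  have PP': "eprod ds P P' = P'" using XX by (simp add: P_def P'_def eprod_assoc[symmetric])
  have P'P: "eprod ds P' P = P" using YY by (simp add: P_def P'_def eprod_assoc[symmetric])
  have hP: "ctrans ds (eprod ds M P) = eprod ds M P" using XX by (simp add: P_def)
  have hP': "ctrans ds (eprod ds M P') = eprod ds M P'" using YY by (simp add: P'_def)
  have "eprod ds M P' = eprod ds M (eprod ds P P')" by (simp add: PP')
  also have "\<dots> = eprod ds (ctrans ds (eprod ds M P)) P'" by (simp add: hP eprod_assoc)
  also have "\<dots> = eprod ds (ctrans ds P) (eprod ds M P')" by (simp add: ctrans_eprod Mh eprod_assoc)
  also have "\<dots> = eprod ds (ctrans ds P) (ctrans ds (eprod ds M P'))" by (simp add: hP')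
  also have "\<dots> = eprod ds (ctrans ds (eprod ds P' P)) M" by (simp add: ctrans_eprod Mh eprod_assoc)
  also have "\<dots> = eprod ds M P" using hP P'P by (simp add: ctrans_eprod Mh)
  finally have AXY: "P = P'"
    using hpd_cancel[OF M, of P P'] by (simp add: P_def P'_def)
  define Q where "Q = eprod ds X A"
  define Q' where "Q' = eprod ds Y A"
  have QQ': "eprod ds Q Q' = Q" using YY by (simp add: Q_def Q'_def eprod_assoc)
  have Q'Q: "eprod ds Q' Q = Q'" using XX by (simp add: Q_def Q'_def eprod_assoc)
  have hQ: "ctrans ds (eprod ds N Q) = eprod ds N Q" using XX by (simp add: Q_def)
  have hQ': "ctrans ds (eprod ds N Q') = eprod ds N Q'" using YY by (simp add: Q'_def)
  have "eprod ds N Q = eprod ds N (eprod ds Q Q')" by (simp add: QQ')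
  also have "\<dots> = eprod ds (ctrans ds (eprod ds N Q)) Q'" by (simp add: hQ eprod_assoc)
  also have "\<dots> = eprod ds (ctrans ds Q) (eprod ds N Q')" by (simp add: ctrans_eprod Nh eprod_assoc)
  also have "\<dots> = eprod ds (ctrans ds Q) (ctrans ds (eprod ds N Q'))" by (simp add: hQ')
  also have "\<dots> = eprod ds (ctrans ds (eprod ds Q' Q)) N" by (simp add: ctrans_eprod Nh eprod_assoc)
  also have "\<dots> = eprod ds N Q'" using hQ' Q'Q by (simp add: ctrans_eprod Nh)
  finally have XAY: "Q = Q'"
    using hpd_cancel[OF N, of Q Q'] by (simp add: Q_def Q'_def)
  have "X = eprod ds (eprod ds X A) X" using XX by simp
  also have "\<dots> = eprod ds Y P" using XAY by (simp add: Q_def Q'_def P_def eprod_assoc)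
  also have "\<dots> = eprod ds (eprod ds Y A) Y" using AXY by (simp add: P'_def eprod_assoc)
  also have "\<dots> = Y" using YY by simp
  finally show ?thesis .
qed

definition csc :: "complex \<Rightarrow> (nat list \<Rightarrow> complex) \<Rightarrow> (nat list \<Rightarrow> complex)" where
  "csc c f = (\<lambda>x. c * f x)"

interpretation fvs: vector_space csc
  by unfold_locales (auto simp: fun_eq_iff algebra_simps csc_def)

lemma evprod_hom: "module_hom csc csc (evprod ds N)"
  unfolding module_hom_def module_hom_axioms_def
proof (intro conjI allI)
  show "module csc" by (rule fvs.module_axioms)
  show "module csc" by (rule fvs.module_axioms)
  fix b1 b2 :: "nat list \<Rightarrow> complex" and r
  show "evprod ds N (b1 + b2) = evprod ds N b1 + evprod ds N b2"
    by (simp add: fun_eq_iff evprod_def distrib_left sum.distrib)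
  show "evprod ds N (csc r b1) = csc r (evprod ds N b1)"
    by (simp add: fun_eq_iff evprod_def csc_def sum_distrib_left mult_ac)
qed

lemma vspace_subspace: "fvs.subspace (vspace ds)"
  by (auto simp: fvs.subspace_def vspace_def csc_def)

definition ev :: "nat list \<Rightarrow> nat list \<Rightarrow> complex" where
  "ev i = (\<lambda>x. if x = i then 1 else 0)"

lemma vspace_span: assumes "y \<in> vspace ds" shows "y \<in> fvs.span (ev ` tidx ds)"
proof -
  have "y = (\<Sum>i\<in>tidx ds. csc (y i) (ev i))"
  proof
    fix x
    have "(\<Sum>i\<in>tidx ds. csc (y i) (ev i)) x = (\<Sum>i\<in>tidx ds. if i = x then y i else 0)"
      unfolding sum_fun_apply by (rule sum.cong) (auto simp: csc_def ev_def)
    also have "\<dots> = y x" using assms by (simp add: sum.delta' finite_tidx vspace_def)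
    finally show "y x = (\<Sum>i\<in>tidx ds. csc (y i) (ev i)) x" by simp
  qed
  also have "\<dots> \<in> fvs.span (ev ` tidx ds)"
    by (intro fvs.span_sum fvs.span_scale fvs.span_base) auto
  finally show ?thesis .
qed

lemma span_ev: "fvs.span (ev ` tidx ds) \<subseteq> vspace ds"
  by (rule fvs.span_minimal[OF _ vspace_subspace]) (auto simp: ev_def vspace_def)

lemma indep_ev: "fvs.independent (ev ` tidx ds)"
  unfolding fvs.independent_explicit_finite_subsets
proof (intro allI impI ballI)
  fix S u v assume S: "S \<subseteq> ev ` tidx ds" "finite S" and s0: "(\<Sum>v\<in>S. csc (u v) v) = 0" and v: "v \<in> S"
  then obtain i where i: "v = ev i" by auto
  have "0 = (\<Sum>w\<in>S. csc (u w) w) i" using s0 by simp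
  also have "\<dots> = (\<Sum>w\<in>S. u w * w i)" by (simp add: sum_fun_apply csc_def)
  also have "\<dots> = u v * v i"
  proof (rule sum.remove[OF S(2) v, THEN trans])
    have "w i = 0" if w: "w \<in> S - {v}" for w
    proof -
      obtain j where "w = ev j" using w S by auto
      then show ?thesis using w i by (auto simp: ev_def)
    qed
    then show "u v * v i + (\<Sum>w\<in>S - {v}. u w * w i) = u v * v i" by (simp add: sum.neutral)
  qed
  also have "\<dots> = u v" by (simp add: i ev_def)
  finally show "u v = 0" by simp
qed

lemma hpd_surj: assumes N: "hpd ds N" and y: "y \<in> vspace ds"
  shows "\<exists>z\<in>vspace ds. evprod ds N z = y"
proof -
  let ?f = "evprod ds N"
  let ?E = "ev ` tidx ds"
  interpret h: module_hom csc csc ?f by (rule evprod_hom)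
  have inj: "inj_on ?f (vspace ds)"
  proof (rule inj_onI)
    fix a b assume ab: "a \<in> vspace ds" "b \<in> vspace ds" "?f a = ?f b"
    have "?f (a - b) = ?f a - ?f b" by (rule h.diff)
    then have "?f (a - b) = 0" using ab by simp
    moreover have "a - b \<in> vspace ds" using ab by (auto simp: vspace_def)
    ultimately have "a - b = 0" using hpd_inj[OF N] by blast
    then show "a = b" by simp
  qed
  have injs: "inj_on ?f (fvs.span ?E)" using inj_on_subset[OF inj span_ev] .
  have ind: "fvs.independent (?f ` ?E)"
    using h.independent_injective_image[OF indep_ev injs] .
  have fin: "finite ?E" using finite_tidx by simp
  have cardNE: "card (?f ` ?E) = card ?E"
    using card_image[OF inj_on_subset[OF injs fvs.span_superset]] .
  have "y \<in> fvs.span (?f ` ?E)"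
  proof (rule ccontr)
    assume ny: "y \<notin> fvs.span (?f ` ?E)"
    have ind2: "fvs.independent (insert y (?f ` ?E))" using fvs.independent_insertI[OF ny ind] .
    have s1: "y \<in> fvs.span ?E" by (rule vspace_span[OF y])
    have s2: "?f ` ?E \<subseteq> fvs.span ?E"
    proof
      fix x assume "x \<in> ?f ` ?E"
      then obtain e where "x = ?f e" by blast
      then show "x \<in> fvs.span ?E" using vspace_span[OF evprod_vspace] by simp
    qed
    have "card (insert y (?f ` ?E)) \<le> card ?E"
      using fvs.independent_span_bound[OF fin ind2] s1 s2 by simp
    moreover have "y \<notin> ?f ` ?E" using ny fvs.span_base by metis
    moreover have "finite (?f ` ?E)" using fin by simp
    ultimately show False using cardNE by simp
  qed
  then have "y \<in> ?f ` fvs.span ?E" using h.span_image by simp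
  then obtain z where z: "z \<in> fvs.span ?E" "y = ?f z" by blast
  have "z \<in> vspace ds" using z(1) span_ev by blast
  then show ?thesis using z(2) by blast
qed

lemma hpd_tinv: assumes N: "hpd ds N"
  shows "tinv ds N \<in> tspace ds \<and> eprod ds N (tinv ds N) = tid ds \<and> eprod ds (tinv ds N) N = tid ds"
proof -
  have Nt: "N \<in> tspace ds" using N by (simp add: hpd_def)
  define zf where "zf j = (SOME z. z \<in> vspace ds \<and> evprod ds N z = ev j)" for j
  have zf: "zf j \<in> vspace ds \<and> evprod ds N (zf j) = ev j" if "j \<in> tidx ds" for j
  proof -
    have "ev j \<in> vspace ds" using that by (auto simp: vspace_def ev_def)
    then have "\<exists>z. z \<in> vspace ds \<and> evprod ds N z = ev j" using hpd_surj[OF N] by blast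
    then show ?thesis unfolding zf_def by (rule someI_ex)
  qed
  define R where "R = (\<lambda>i j. if j \<in> tidx ds then zf j i else 0)"
  have Rt: "R \<in> tspace ds" using zf by (auto simp: R_def tspace_def vspace_def)
  have NR: "eprod ds N R = tid ds"
  proof (intro ext)
    fix i j
    show "eprod ds N R i j = tid ds i j"
    proof (cases "i \<in> tidx ds \<and> j \<in> tidx ds")
      case True
      then have "eprod ds N R i j = evprod ds N (zf j) i" by (simp add: eprod_def evprod_def R_def)
      also have "\<dots> = ev j i" using zf True by simp
      finally show ?thesis using True by (auto simp: tid_def ev_def)
    qed (auto simp: eprod_def tid_def)
  qed
  have RN: "eprod ds R N = tid ds"
  proof (rule hpd_cancel[OF N])
    show "eprod ds N (eprod ds R N) = eprod ds N (tid ds)"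
      by (simp add: eprod_assoc[symmetric] NR eprod_tid_left[OF Nt] eprod_tid_right[OF Nt])
  qed auto
  have "tinv ds N = R"
    unfolding tinv_def
  proof (rule the_equality)
    show "R \<in> tspace ds \<and> eprod ds N R = tid ds \<and> eprod ds R N = tid ds" using Rt NR RN by simp
    fix X assume "X \<in> tspace ds \<and> eprod ds N X = tid ds \<and> eprod ds X N = tid ds"
    then show "X = R" using hpd_cancel[OF N, of X R] Rt NR by simp
  qed
  then show ?thesis using Rt NR RN by simp
qed

lemma sum_delta2:
  fixes F :: "nat \<Rightarrow> nat \<Rightarrow> nat list \<Rightarrow> nat list \<Rightarrow> complex"
  assumes "finite K" and c: "\<And>k l. k \<in> K \<Longrightarrow> l \<in> K \<Longrightarrow> c k l = (if l = k then 1 else 0)"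
  shows "(\<Sum>k\<in>K. \<Sum>l\<in>K. (\<lambda>i j. c k l * F k l i j)) = (\<Sum>k\<in>K. F k k)"
proof (rule sum.cong[OF refl])
  fix k assume k: "k \<in> K"
  have "(\<Sum>l\<in>K. (\<lambda>i j. c k l * F k l i j)) = (\<Sum>l\<in>K. if l = k then F k l else 0)"
    by (rule sum.cong) (auto simp: c k fun_eq_iff)
  also have "\<dots> = F k k" using assms(1) k by (simp add: sum.delta')
  finally show "(\<Sum>l\<in>K. (\<lambda>i j. c k l * F k l i j)) = F k k" .
qed

theorem theorem6p13:
  fixes ds :: "nat list" and r :: nat
    and A M N :: "nat list \<Rightarrow> nat list \<Rightarrow> complex"
    and U V :: "nat \<Rightarrow> nat list \<Rightarrow> complex"
  assumes "A \<in> tspace ds"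
    and "hpd ds M" and "hpd ds N"
    and "orthonormal_wrt ds M r U"
    and "orthonormal_wrt ds (tinv ds N) r V"
    and "A = (\<Sum>k\<in>{1..r}. outer ds (U k) (V k))"
  shows "wmpinv ds A M N = eprod ds (eprod ds (tinv ds N) (\<Sum>k\<in>{1..r}. outer ds (V k) (U k))) M
     \<and> numrange ds (wmpinv ds A M N) = numrange ds (wctrans ds A M N)"
proof -
  note M = assms(2) and N = assms(3)
  define K where "K = {1..r}"
  have finK: "finite K" by (simp add: K_def)
  define Ni where "Ni = tinv ds N"
  have Mh: "ctrans ds M = M" using M by (simp add: hpd_def)
  have NNi: "eprod ds N Ni = tid ds" using hpd_tinv[OF N] by (simp add: Ni_def)
  define a where "a k = evprod ds Ni (V k)" for k
  define b where "b k = evprod ds M (U k)" for k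
  have Vv: "V k \<in> vspace ds" if "k \<in> K" for k using assms(5) that by (simp add: orthonormal_wrt_def K_def)
  have ob: "tinner ds (b k) (U l) = (if k = l then 1 else 0)" if "k \<in> K" "l \<in> K" for k l
    using assms(4) that by (simp add: orthonormal_wrt_def K_def b_def)
  have oa: "tinner ds (a k) (V l) = (if k = l then 1 else 0)" if "k \<in> K" "l \<in> K" for k l
    using assms(5) that by (simp add: orthonormal_wrt_def K_def a_def Ni_def)
  have ob': "tinner ds (U l) (b k) = (if l = k then 1 else 0)" if "k \<in> K" "l \<in> K" for k l
    using ob[OF that] tinner_cnj[of ds "U l" "b k"] by auto
  have oa': "tinner ds (a l) (V k) = (if l = k then 1 else 0)" if "k \<in> K" "l \<in> K" for k l
    using oa[OF that(2,1)] by simp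
  have ob'': "tinner ds (U l) (b k) = (if l = k then 1 else 0)" if "k \<in> K" "l \<in> K" for k l
    using ob'[OF that] .
  define X0 where "X0 = eprod ds (eprod ds Ni (\<Sum>k\<in>K. outer ds (V k) (U k))) M"
  have X0: "X0 = (\<Sum>k\<in>K. outer ds (a k) (b k))"
    by (simp add: X0_def eprod_sum_left eprod_sum_right eprod_outer_left eprod_outer_right Mh a_def b_def)
  have AK: "A = (\<Sum>k\<in>K. outer ds (U k) (V k))" using assms(6) by (simp add: K_def)
  have AX: "eprod ds A X0 = (\<Sum>k\<in>K. outer ds (U k) (b k))"
    unfolding AK X0 eprod_sum_left eprod_sum_right eprod_outer_outer
    by (rule sum_delta2[OF finK]) (auto simp: oa ob')
  have AXA: "eprod ds (eprod ds A X0) A = A"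
    unfolding AX AK[symmetric] unfolding AK eprod_sum_left eprod_sum_right eprod_outer_outer
    by (rule sum_delta2[OF finK]) (auto simp: oa ob')
  have XA: "eprod ds X0 A = (\<Sum>k\<in>K. outer ds (a k) (V k))"
    unfolding AK X0 eprod_sum_left eprod_sum_right eprod_outer_outer
    by (rule sum_delta2[OF finK]) (auto simp: oa ob')
  have XAX: "eprod ds (eprod ds X0 A) X0 = X0"
    unfolding XA unfolding X0 eprod_sum_left eprod_sum_right eprod_outer_outer
    by (rule sum_delta2[OF finK]) (auto simp: oa ob')
  have MAX: "eprod ds M (eprod ds A X0) = (\<Sum>k\<in>K. outer ds (b k) (b k))"
    unfolding AX eprod_sum_right eprod_outer_left b_def ..
  have NXA: "eprod ds N (eprod ds X0 A) = (\<Sum>k\<in>K. outer ds (V k) (V k))"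
    unfolding XA eprod_sum_right eprod_outer_left
  proof (rule sum.cong[OF refl])
    fix k assume "k \<in> K"
    have "evprod ds N (a k) = V k"
      by (simp add: a_def evprod_eprod[symmetric] NNi evprod_tid Vv \<open>k \<in> K\<close>)
    then show "outer ds (evprod ds N (a k)) (V k) = outer ds (V k) (V k)" by simp
  qed
  have pred: "wmp_pred ds A M N X0"
    unfolding wmp_pred_def
    using AXA XAX by (simp add: MAX NXA ctrans_sum ctrans_outer, simp add: X0_def)
  have W: "wmpinv ds A M N = X0"
    unfolding wmpinv_def wmp_pred_def[symmetric]
    by (rule the_equality[where P="wmp_pred ds A M N", OF pred], rule wmp_unique[OF M N _ pred], assumption)
  have "wctrans ds A M N = X0"
    by (simp add: wctrans_def AK ctrans_sum ctrans_outer X0_def Ni_def)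
  then show ?thesis using W by (simp add: X0_def K_def Ni_def)
qed

end
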